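(* Let $d\in\mathbb N$, $\mathcal D=\{1,\dots,d\}$, $f\in \mathrm L_2(\mathbb T^d)$ and let $U\subseteq\mathcal P(\mathcal D)$ be a subset of ANOVA terms. Then $$\mathrm T_Uf=\sum_{\mathbf u\in U}\ \sum_{\substack{\mathbf v\in U\\ \mathbf u\subseteq\mathbf v}}(-1)^{|\mathbf v|-|\mathbf u|}\,\mathrm P_{\mathbf u}f.$$
   Context: $\mathbb T=[0,1)$ with periodic identification. For $\mathbf u\subseteq\mathcal D$, $\mathbf u^c=\mathcal D\setminus\mathbf u$, $\mathbf x_{\mathbf u}=(x_i)_{i\in\mathbf u}$. Projection: $\mathrm P_{\mathbf u}f(\mathbf x_{\mathbf u})=\int_{\mathbb T^{|\mathbf u^c|}}f(\mathbf x)\,d\mathbf x_{\mathbf u^c}$, viewed as a function on $\mathbb T^d$. ANOVA terms: $f_{\mathbf u}=\mathrm P_{\mathbf u}f-\sum_{\mathbf v\subsetneq\mathbf u}f_{\mathbf v}$ (recursively). A subset of ANOVA terms is a set $U\subseteq\mathcal P(\mathcal D)$ such that $\mathbf u\in U$, $\mathbf v\subseteq\mathbf u$ imply $\mathbf v\in U$; $\mathrm T_Uf=\sum_{\mathbf u\in U}f_{\mathbf u}$. *)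

theory Defs
  imports "HOL-Probability.Probability"
begin

definition Dset :: "nat \<Rightarrow> nat set" where
  "Dset d = {1..d}"

definition torus1 :: "real measure" where
  "torus1 = restrict_space lborel {0..<1}"

definition torus :: "nat set \<Rightarrow> (nat \<Rightarrow> real) measure" where
  "torus I = PiM I (\<lambda>_. torus1)"

definition L2_torus :: "nat \<Rightarrow> ((nat \<Rightarrow> real) \<Rightarrow> complex) set" where
  "L2_torus d = {f. f \<in> borel_measurable (torus (Dset d))
                   \<and> integrable (torus (Dset d)) (\<lambda>x. (norm (f x))\<^sup>2)}"

text \<open>Projection P_u f: integrate out the variables in u^c = D - u; the result is
  viewed as a function on T^d (depending only on x_u).\<close>
definition proj :: "nat \<Rightarrow> nat set \<Rightarrow> ((nat \<Rightarrow> real) \<Rightarrow> complex) \<Rightarrow> (nat \<Rightarrow> real) \<Rightarrow> complex" where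
  "proj d u f x = (\<integral>y. f (merge u (Dset d - u) (x, y)) \<partial>torus (Dset d - u))"

function anova :: "nat \<Rightarrow> ((nat \<Rightarrow> real) \<Rightarrow> complex) \<Rightarrow> nat set \<Rightarrow> (nat \<Rightarrow> real) \<Rightarrow> complex" where
  "anova d f u = (if finite u
      then (\<lambda>x. proj d u f x - (\<Sum>v\<in>{v. v \<subset> u}. anova d f v x))
      else (\<lambda>x. 0))"
  by auto
termination
  by (relation "inv_image finite_psubset (\<lambda>(d, f, u). u)") auto

definition anova_subset :: "nat \<Rightarrow> nat set set \<Rightarrow> bool" where
  "anova_subset d U \<longleftrightarrow> U \<subseteq> Pow (Dset d) \<and> (\<forall>u\<in>U. \<forall>v. v \<subseteq> u \<longrightarrow> v \<in> U)"

definition trunc :: "nat \<Rightarrow> nat set set \<Rightarrow> ((nat \<Rightarrow> real) \<Rightarrow> complex) \<Rightarrow> (nat \<Rightarrow> real) \<Rightarrow> complex" where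
  "trunc d U f x = (\<Sum>u\<in>U. anova d f u x)"

end

theory Submission
  imports Defs
begin

lemma anova_moebius:
  assumes "finite u"
  shows "anova d f u x = (\<Sum>w\<in>Pow u. (-1) ^ (card u - card w) * proj d w f x)"
proof -
  have g: "proj d S f x = sum (\<lambda>v. anova d f v x) (Pow S)" if "finite S" for S
  proof -
    have "Pow S = insert S {v. v \<subset> S}" by auto
    moreover have "finite {v. v \<subset> S}" proof (rule finite_subset)
      show "{v. v \<subset> S} \<subseteq> Pow S" by auto
      show "finite (Pow S)" using that by simp
    qed
    ultimately show ?thesis using that by simp
  qed
  show ?thesis
    by (rule inclusion_exclusion_mobius[where g="\<lambda>S. proj d S f x"]) (use g assms in auto)
qed

theorem lemma4p4:
  fixes d :: nat and f :: "(nat \<Rightarrow> real) \<Rightarrow> complex" and U :: "nat set set"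
  assumes "f \<in> L2_torus d"
    and "anova_subset d U"
  shows "\<forall>x \<in> space (torus (Dset d)).
           trunc d U f x =
           (\<Sum>u\<in>U. \<Sum>v\<in>{v\<in>U. u \<subseteq> v}. (-1) ^ (card v - card u) * proj d u f x)"
proof
  fix x
  have sub: "U \<subseteq> Pow (Dset d)" and dc: "\<And>u v. u \<in> U \<Longrightarrow> v \<subseteq> u \<Longrightarrow> v \<in> U"
    using assms(2) unfolding anova_subset_def by auto
  have finU: "finite U" using sub by (rule finite_subset) (simp add: Dset_def)
  have fin: "\<And>u. u \<in> U \<Longrightarrow> finite u" using sub
    unfolding Dset_def by (meson PowD finite_atLeastAtMost finite_subset subsetD)
  have "trunc d U f x = (\<Sum>v\<in>U. \<Sum>w\<in>{w\<in>U. w \<subseteq> v}. (-1) ^ (card v - card w) * proj d w f x)"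
    unfolding trunc_def
  proof (rule sum.cong[OF refl])
    fix v assume v: "v \<in> U"
    have "Pow v = {w\<in>U. w \<subseteq> v}" using v dc by auto
    then show "anova d f v x = (\<Sum>w\<in>{w\<in>U. w \<subseteq> v}. (-1) ^ (card v - card w) * proj d w f x)"
      using anova_moebius[OF fin[OF v]] by simp
  qed
  also have "\<dots> = (\<Sum>u\<in>U. \<Sum>v\<in>{v\<in>U. u \<subseteq> v}. (-1) ^ (card v - card u) * proj d u f x)"
    by (rule sum.swap_restrict[OF finU finU])
  finally show "trunc d U f x =
           (\<Sum>u\<in>U. \<Sum>v\<in>{v\<in>U. u \<subseteq> v}. (-1) ^ (card v - card u) * proj d u f x)" .
qed

end
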